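(* Let $0<a<1$ and let $(\mathbf X_j)_{j\ge0}$ be the persistent random walk on $\mathbb Z$ with persistence parameter $a$ started at $\mathbf X_0=0$. Let $\mathbf L:=\inf\{j\ge1:\mathbf X_j=0\}$, let $\mathbf R,\mathbf V$ be the numbers of runs and short runs of the excursion path $\mathbf X_0,\dots,\mathbf X_{\mathbf L}$, and $\mathbf H:=\max\{|\mathbf X_j|:1\le j\le\mathbf L\}$. For $N\ge1$ let $K_N(a):=E\{r^{\mathbf R}y^{\mathbf V}z^{\mathbf L}\mid\mathbf X_0=0,\ \mathbf H\le N\}$. Then for all $N\ge1$, $$K_N(a)=\frac{N-(N-1)a}{N}\cdot\frac{r^2z^2\,q^*_N(a)}{w^*_N(a)},$$ as an identity of formal power series in $z$ with coefficients polynomial in $r,y$ (the right side being expanded in powers of $z$; note $w^*_N(a)=1$ at $z=0$).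
   Context: Persistent random walk with parameter $a$: increments $\varepsilon_j\in\{\pm1\}$, $P(\varepsilon_1=\pm1)=\frac12$, and for $j\ge1$ the next increment equals the previous with probability $a$, reversed with probability $1-a$. A run of a nearest-neighbour path is a maximal block of consecutive steps all $+1$ or all $-1$; a short run is a run of one step. Define $\omega_a:=1-(1-a)^2r^2y^2z^2$, $\tau_a:=1+(1-a)^2r^2z^2y(1-y)$, $x_a:=a^2z^2\tau_a^2$, $\beta_a:=1+z^2(a^2-(1-a)^2r^2(y^2+a^2(1-y)^2z^2))$; $w^*_0(a):=(\beta_a-\omega_a)/x_a$, $w^*_1(a):=1$, $w^*_{n+1}(a):=\beta_aw^*_n(a)-x_aw^*_{n-1}(a)$ ($n\ge1$); $q^*_0(a):=-(1-y)(1+y+(1-a)^2r^2y^2z^2(1-y))/\tau_a^2$, $q^*_1(a):=y^2$, $q^*_{n+1}(a):=\beta_aq^*_n(a)-x_aq^*_{n-1}(a)$ ($n\ge1$). *)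

theory Defs
  imports "HOL-Computational_Algebra.Formal_Power_Series"
begin

text \<open>A finite increment sequence eps_1..eps_n is an int list with entries in {-1,1}.\<close>

definition path_prob :: "real \<Rightarrow> int list \<Rightarrow> real" where
  "path_prob a es =
     (if es = [] then 1
      else (1/2) * (\<Prod>j<length es - 1. if es ! Suc j = es ! j then a else 1 - a))"

definition walk :: "int list \<Rightarrow> nat \<Rightarrow> int" where
  "walk es k = sum_list (take k es)"

definition exc_paths :: "nat \<Rightarrow> nat \<Rightarrow> int list set" where
  "exc_paths n N = {es. length es = n \<and> set es \<subseteq> {-1, 1} \<and> 1 \<le> n \<and>
       walk es n = 0 \<and> (\<forall>k\<in>{1..<n}. walk es k \<noteq> 0) \<and>
       (\<forall>k\<in>{1..n}. \<bar>walk es k\<bar> \<le> int N)}"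

fun runs :: "'a list \<Rightarrow> 'a list list" where
  "runs [] = []"
| "runs (x # xs) =
     (case runs xs of
        [] \<Rightarrow> [[x]]
      | r # rs \<Rightarrow> (if hd r = x then (x # r) # rs else [x] # r # rs))"

definition num_runs :: "'a list \<Rightarrow> nat" where
  "num_runs es = length (runs es)"

definition num_short_runs :: "'a list \<Rightarrow> nat" where
  "num_short_runs es = length (filter (\<lambda>b. length b = 1) (runs es))"

definition prob_H_le :: "real \<Rightarrow> nat \<Rightarrow> real" where
  "prob_H_le a N = (\<Sum>n. \<Sum>es\<in>exc_paths n N. path_prob a es)"

text \<open>K_N(a) = E[r^R y^V z^L | H \<le> N] as a formal power series in z:
  the coefficient of z^n is E[r^R y^V; L = n, H \<le> N] / P(H \<le> N).\<close>
definition K_fps :: "real \<Rightarrow> real \<Rightarrow> real \<Rightarrow> nat \<Rightarrow> real fps" where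
  "K_fps a r y N = Abs_fps (\<lambda>n.
     (\<Sum>es\<in>exc_paths n N. path_prob a es * r ^ num_runs es * y ^ num_short_runs es)
       / prob_H_le a N)"

definition omega_a :: "real \<Rightarrow> real \<Rightarrow> real \<Rightarrow> real fps" where
  "omega_a a r y = 1 - fps_const ((1 - a)^2 * r^2 * y^2) * fps_X^2"

definition tau_a :: "real \<Rightarrow> real \<Rightarrow> real \<Rightarrow> real fps" where
  "tau_a a r y = 1 + fps_const ((1 - a)^2 * r^2) * fps_X^2 * fps_const (y * (1 - y))"

definition x_a :: "real \<Rightarrow> real \<Rightarrow> real \<Rightarrow> real fps" where
  "x_a a r y = fps_const (a^2) * fps_X^2 * (tau_a a r y)^2"

definition beta_a :: "real \<Rightarrow> real \<Rightarrow> real \<Rightarrow> real fps" where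
  "beta_a a r y = 1 + fps_X^2 * (fps_const (a^2) - fps_const ((1 - a)^2 * r^2) *
      (fps_const (y^2) + fps_const (a^2 * (1 - y)^2) * fps_X^2))"

fun w_star :: "real \<Rightarrow> real \<Rightarrow> real \<Rightarrow> nat \<Rightarrow> real fps" where
  "w_star a r y 0 = (beta_a a r y - omega_a a r y) / x_a a r y"
| "w_star a r y (Suc 0) = 1"
| "w_star a r y (Suc (Suc n)) =
     beta_a a r y * w_star a r y (Suc n) - x_a a r y * w_star a r y n"

fun q_star :: "real \<Rightarrow> real \<Rightarrow> real \<Rightarrow> nat \<Rightarrow> real fps" where
  "q_star a r y 0 = - fps_const (1 - y) *
      (fps_const (1 + y) + fps_const ((1 - a)^2 * r^2 * y^2 * (1 - y)) * fps_X^2)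
      / (tau_a a r y)^2"
| "q_star a r y (Suc 0) = fps_const (y^2)"
| "q_star a r y (Suc (Suc n)) =
     beta_a a r y * q_star a r y (Suc n) - x_a a r y * q_star a r y n"

end

theory Submission
  imports Defs
begin

unbundle fps_syntax


lemma runs_cons_cons:
  "runs (e' # rest) = r1 # rs \<Longrightarrow>
   runs (e # e' # rest) = (if hd r1 = e then (e # r1) # rs else [e] # r1 # rs)"
  by (simp del: runs.simps add: runs.simps(2)[of e "e' # rest"])

lemma runs_cons_shape:
  "\<exists>r1 rs. runs (e # rest) = r1 # rs \<and> r1 \<noteq> [] \<and> hd r1 = e \<and>
     (length r1 = 1 \<longleftrightarrow> (rest = [] \<or> hd rest \<noteq> e))"
proof (induction rest arbitrary: e)
  case Nil then show ?case by simp
next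
  case (Cons e' rest)
  from Cons.IH[of e'] obtain r1 rs where h: "runs (e' # rest) = r1 # rs" "r1 \<noteq> []" "hd r1 = e'" by blast
  note rc = runs_cons_cons[OF h(1), of e]
  show ?case
  proof (cases "e = e'")
    case True
    then show ?thesis using h rc by (intro exI[of _ "e # r1"] exI[of _ rs]) simp
  next
    case False
    then show ?thesis using h rc by (intro exI[of _ "[e]"] exI[of _ "r1 # rs"]) simp
  qed
qed

lemma num_runs_single: "num_runs [e] = 1"
  by (simp add: num_runs_def)
lemma num_short_single: "num_short_runs [e] = 1"
  by (simp add: num_short_runs_def)

lemma num_runs_cons2:
  "num_runs (e # e' # rest) = num_runs (e' # rest) + (if e = e' then 0 else 1)"
proof -
  obtain r1 rs where h: "runs (e' # rest) = r1 # rs" "r1 \<noteq> []" "hd r1 = e'"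
    using runs_cons_shape[of e' rest] by auto
  note rc = runs_cons_cons[OF h(1), of e]
  show ?thesis unfolding num_runs_def rc h(1) h(3) by simp
qed

lemma num_runs_pos: "num_runs (e # rest) \<ge> 1"
proof -
  obtain r1 rs where h: "runs (e # rest) = r1 # rs"
    using runs_cons_shape[of e rest] by auto
  show ?thesis unfolding num_runs_def h by simp
qed

definition shortf :: "'a \<Rightarrow> 'a list \<Rightarrow> nat" where
  "shortf e rest = (if rest = [] \<or> hd rest \<noteq> e then 1 else 0)"

lemma num_short_ge: "num_short_runs (e # rest) \<ge> shortf e rest"
proof -
  obtain r1 rs where h: "runs (e # rest) = r1 # rs" "r1 \<noteq> []" "hd r1 = e"
     "(length r1 = 1 \<longleftrightarrow> (rest = [] \<or> hd rest \<noteq> e))"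
    using runs_cons_shape[of e rest] by auto
  show ?thesis unfolding num_short_runs_def h(1) shortf_def using h(4) by simp
qed

lemma num_short_cons2:
  "num_short_runs (e # e' # rest) =
    (if e = e' then num_short_runs (e' # rest) - shortf e' rest else num_short_runs (e' # rest) + 1)"
proof -
  obtain r1 rs where h: "runs (e' # rest) = r1 # rs" "r1 \<noteq> []" "hd r1 = e'"
     "(length r1 = 1 \<longleftrightarrow> (rest = [] \<or> hd rest \<noteq> e'))"
    using runs_cons_shape[of e' rest] by auto
  note rc = runs_cons_cons[OF h(1), of e]
  have l1: "length r1 \<ge> 1" using h(2) by (cases r1) auto
  have A: "num_short_runs (e' # rest) = shortf e' rest + length (filter (\<lambda>b. length b = 1) rs)"
    unfolding num_short_runs_def h(1) shortf_def using h(4) by simp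
  show ?thesis
  proof (cases "e = e'")
    case True
    then have "num_short_runs (e # e' # rest) = length (filter (\<lambda>b. length b = 1) rs)"
      unfolding num_short_runs_def rc using l1 h(2,3) by simp
    then show ?thesis using True A by simp
  next
    case False
    then have "num_short_runs (e # e' # rest) = 1 + num_short_runs (e' # rest)"
      unfolding num_short_runs_def rc h(1) using h(3) by simp
    then show ?thesis using False by simp
  qed
qed



definition trf :: "real \<Rightarrow> int option \<Rightarrow> int \<Rightarrow> real" where
  "trf a l e = (case l of None \<Rightarrow> 1/2 | Some p \<Rightarrow> if p = e then a else 1 - a)"

definition stepf :: "real \<Rightarrow> real \<Rightarrow> real \<Rightarrow> int option \<Rightarrow> int \<Rightarrow> int option \<Rightarrow> real" where
  "stepf a r y l e nx = trf a l e * (if l = Some e then 1 else r * (if nx = Some e then 1 else y))"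

definition nxt :: "int list \<Rightarrow> int option \<Rightarrow> int option" where
  "nxt v rc = (case v of [] \<Rightarrow> rc | x # _ \<Rightarrow> Some x)"

fun wt :: "real \<Rightarrow> real \<Rightarrow> real \<Rightarrow> int option \<Rightarrow> int option \<Rightarrow> int list \<Rightarrow> real" where
  "wt a r y l rc [] = 1"
| "wt a r y l rc (e # es) = stepf a r y l e (nxt es rc) * wt a r y (Some e) rc es"

fun tpo :: "real \<Rightarrow> int option \<Rightarrow> int list \<Rightarrow> real" where
  "tpo a l [] = 1"
| "tpo a l (e # es) = trf a l e * tpo a (Some e) es"

lemma prod_tpo:
  "(\<Prod>j<length es. if (e # es) ! Suc j = (e # es) ! j then a else 1 - a) = tpo a (Some e) es"
proof (induction es arbitrary: e)
  case Nil then show ?case by simp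
next
  case (Cons e' es)
  have "(\<Prod>j<length (e' # es). if (e # e' # es) ! Suc j = (e # e' # es) ! j then a else 1 - a)
      = (if e' = e then a else 1 - a) *
        (\<Prod>j<length es. if (e' # es) ! Suc j = (e' # es) ! j then a else 1 - a)"
    by (simp only: length_Cons prod.lessThan_Suc_shift nth_Cons_Suc nth_Cons_0)
  also have "\<dots> = tpo a (Some e) (e' # es)" using Cons.IH[of e'] by (simp add: trf_def)
  finally show ?case .
qed

lemma path_prob_tpo: "path_prob a es = tpo a None es"
proof (cases es)
  case Nil then show ?thesis by (simp add: path_prob_def)
next
  case (Cons e rest)
  then show ?thesis using prod_tpo[where es=rest and e=e and a=a] by (simp add: path_prob_def trf_def)
qed

lemma wt_tail:
  "wt a r y (Some e) None rest =
     tpo a (Some e) rest * r ^ (num_runs (e # rest) - 1) *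
     y ^ (num_short_runs (e # rest) - shortf e rest)"
proof (induction rest arbitrary: e)
  case Nil then show ?case by (simp add: num_runs_single num_short_single shortf_def)
next
  case (Cons e' rest)
  have nx: "(nxt rest None = Some e') \<longleftrightarrow> shortf e' rest = 0"
    by (cases rest) (auto simp: nxt_def shortf_def)
  show ?case
  proof (cases "e = e'")
    case True
    then show ?thesis using Cons.IH[of e']
      by (simp add: stepf_def trf_def num_runs_cons2 num_short_cons2 shortf_def)
  next
    case False
    have g1: "num_runs (e' # rest) \<ge> 1" by (rule num_runs_pos)
    have g2: "num_short_runs (e' # rest) \<ge> shortf e' rest" by (rule num_short_ge)
    have s1: "shortf e (e' # rest) = 1" using False by (simp add: shortf_def)
    have r1: "r ^ (num_runs (e' # rest)) = r * r ^ (num_runs (e' # rest) - 1)"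
      using g1 by (metis Suc_diff_le diff_Suc_1 power_Suc)
    have y1: "y ^ (num_short_runs (e' # rest)) =
        y ^ shortf e' rest * y ^ (num_short_runs (e' # rest) - shortf e' rest)"
      using g2 by (simp add: power_add[symmetric])
    have st: "stepf a r y (Some e) e' (nxt rest None) = (1 - a) * r * y ^ shortf e' rest"
      using False nx by (auto simp: stepf_def trf_def shortf_def)
    show ?thesis
      using False Cons.IH[of e'] st r1 y1 s1
      by (simp add: num_runs_cons2 num_short_cons2 trf_def)
  qed
qed

lemma wt_path:
  "wt a r y None None (e # rest) =
     path_prob a (e # rest) * r ^ num_runs (e # rest) * y ^ num_short_runs (e # rest)"
proof -
  have g1: "num_runs (e # rest) \<ge> 1" by (rule num_runs_pos)
  have g2: "num_short_runs (e # rest) \<ge> shortf e rest" by (rule num_short_ge)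
  have nx: "(nxt rest None = Some e) \<longleftrightarrow> shortf e rest = 0"
    by (cases rest) (auto simp: nxt_def shortf_def)
  have r1: "r ^ (num_runs (e # rest)) = r * r ^ (num_runs (e # rest) - 1)"
    using g1 by (metis Suc_diff_le diff_Suc_1 power_Suc)
  have y1: "y ^ (num_short_runs (e # rest)) =
        y ^ shortf e rest * y ^ (num_short_runs (e # rest) - shortf e rest)"
    using g2 by (simp add: power_add[symmetric])
  have st: "stepf a r y None e (nxt rest None) = 1/2 * r * y ^ shortf e rest"
    using nx by (auto simp: stepf_def trf_def shortf_def)
  show ?thesis using st r1 y1 wt_tail[of a r y e rest]
    by (simp add: path_prob_tpo trf_def)
qed

lemma wt_neg:
  "wt a r y (map_option uminus l) (map_option uminus rc) (map uminus es) = wt a r y l rc es"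
proof (induction es arbitrary: l)
  case Nil then show ?case by simp
next
  case (Cons e es)
  have "stepf a r y (map_option uminus l) (- e) (nxt (map uminus es) (map_option uminus rc))
        = stepf a r y l e (nxt es rc)"
    by (cases l; cases rc; cases es) (auto simp: stepf_def trf_def nxt_def)
  then show ?case using Cons.IH[of "Some e"] by simp
qed

lemma wt_append:
  "wt a r y l rc (u @ v) = wt a r y l (nxt v rc) u * wt a r y (if u = [] then l else Some (last u)) rc v"
proof (induction u arbitrary: l)
  case Nil then show ?case by simp
next
  case (Cons e u)
  have "nxt (u @ v) rc = nxt u (nxt v rc)" by (cases u) (auto simp: nxt_def)
  then show ?case using Cons.IH[of "Some e"] by simp
qed



lemma walk_0[simp]: "walk xs 0 = 0" by (simp add: walk_def)

lemma walk_append: "walk (u @ v) j = walk u j + walk v (j - length u)"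
  by (simp add: walk_def)

lemma walk_ge: "length u \<le> j \<Longrightarrow> walk u j = sum_list u"
  by (simp add: walk_def)

lemma walk_Suc: "j < length u \<Longrightarrow> walk u (Suc j) = walk u j + u ! j"
  by (simp add: walk_def take_Suc_conv_app_nth)

lemma walk_neg: "walk (map uminus es) k = - walk es k"
proof -
  have "sum_list (map uminus xs) = - sum_list (xs::int list)" for xs
    by (induction xs) auto
  then show ?thesis by (simp add: walk_def take_map)
qed

definition Mprop :: "nat \<Rightarrow> int list \<Rightarrow> bool" where
  "Mprop h xs \<longleftrightarrow> set xs \<subseteq> {-1, 1} \<and> walk xs (length xs) = 0 \<and>
     (\<forall>k\<le>length xs. 0 \<le> walk xs k \<and> walk xs k \<le> int h)"

definition Eprop :: "nat \<Rightarrow> int list \<Rightarrow> bool" where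
  "Eprop h es \<longleftrightarrow> set es \<subseteq> {-1, 1} \<and> 1 \<le> length es \<and> walk es (length es) = 0 \<and>
     (\<forall>k\<in>{1..<length es}. 1 \<le> walk es k \<and> walk es k \<le> int h)"

definition Mset :: "nat \<Rightarrow> nat \<Rightarrow> int list set" where
  "Mset h n = {xs. length xs = n \<and> Mprop h xs}"
definition Mne :: "nat \<Rightarrow> nat \<Rightarrow> int list set" where
  "Mne h n = {xs. length xs = n \<and> xs \<noteq> [] \<and> Mprop h xs}"
definition Eset :: "nat \<Rightarrow> nat \<Rightarrow> int list set" where
  "Eset h n = {es. length es = n \<and> Eprop h es}"

lemma finite_pm: "finite {xs::int list. set xs \<subseteq> {-1, 1} \<and> length xs = n}"
  by (rule finite_lists_length_eq) simp

lemma finite_Mset: "finite (Mset h n)"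
  by (rule finite_subset[OF _ finite_pm[of n]]) (auto simp: Mset_def Mprop_def)
lemma finite_Mne: "finite (Mne h n)"
  by (rule finite_subset[OF _ finite_pm[of n]]) (auto simp: Mne_def Mprop_def)
lemma finite_Eset: "finite (Eset h n)"
  by (rule finite_subset[OF _ finite_pm[of n]]) (auto simp: Eset_def Eprop_def)

lemma Mset_eq: "Mset h n = (if n = 0 then {[]} else Mne h n)"
  by (auto simp: Mset_def Mne_def Mprop_def)

lemma pm_cases: "set xs \<subseteq> {-1, 1} \<Longrightarrow> j < length xs \<Longrightarrow> xs ! j = 1 \<or> xs ! j = -1"
  using nth_mem by fastforce

lemma Mne_0: "Mne 0 n = {}"
proof -
  { fix xs assume "xs \<noteq> []" "Mprop 0 xs"
    then have "walk xs 1 = xs ! 0" using walk_Suc[of 0 xs] by simp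
    moreover have "1 \<le> length xs" using \<open>xs \<noteq> []\<close> by (cases xs) auto
    moreover have "walk xs 1 = 0" using \<open>Mprop 0 xs\<close> \<open>1 \<le> length xs\<close>
      unfolding Mprop_def by force
    moreover have "xs ! 0 = 1 \<or> xs ! 0 = -1" using pm_cases \<open>Mprop 0 xs\<close> \<open>xs \<noteq> []\<close>
      by (auto simp: Mprop_def)
    ultimately have False by auto }
  then show ?thesis by (auto simp: Mne_def)
qed

lemma walk_wrap:
  assumes "1 \<le> k" "k \<le> length xs + 1"
  shows "walk (1 # xs @ [-1]) k = 1 + walk xs (k - 1)"
proof -
  have "walk (1 # xs @ [-1]) k = walk [1] k + walk (xs @ [-1]) (k - 1)"
    using walk_append[of "[1]" "xs @ [-1]" k] by simp
  also have "walk (xs @ [-1]) (k - 1) = walk xs (k - 1)"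
    using assms by (simp add: walk_append)
  also have "walk [1] k = 1" using assms by (simp add: walk_def)
  finally show ?thesis by simp
qed

lemma walk_wrap_end: "walk (1 # xs @ [-1]) (length xs + 2) = walk xs (length xs)"
  by (simp add: walk_def)

lemma Eprop_wrap: "Eprop (Suc h) (1 # xs @ [-1]) \<longleftrightarrow> Mprop h xs"
proof
  assume E: "Eprop (Suc h) (1 # xs @ [-1])"
  have "\<forall>k\<le>length xs. 0 \<le> walk xs k \<and> walk xs k \<le> int h"
  proof (intro allI impI)
    fix k assume "k \<le> length xs"
    then have "Suc k \<in> {1..<length (1 # xs @ [-1])}" by simp
    then have "1 \<le> walk (1 # xs @ [-1]) (Suc k) \<and> walk (1 # xs @ [-1]) (Suc k) \<le> int (Suc h)"
      using E by (auto simp: Eprop_def)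
    moreover have "walk (1 # xs @ [-1]) (Suc k) = 1 + walk xs k"
      using walk_wrap[of "Suc k" xs] \<open>k \<le> length xs\<close> by simp
    ultimately show "0 \<le> walk xs k \<and> walk xs k \<le> int h" by simp
  qed
  moreover have "walk xs (length xs) = 0"
    using E walk_wrap_end[of xs] by (simp add: Eprop_def)
  moreover have "set xs \<subseteq> {-1, 1}" using E by (auto simp: Eprop_def)
  ultimately show "Mprop h xs" by (simp add: Mprop_def)
next
  assume M: "Mprop h xs"
  have "\<forall>k\<in>{1..<length (1 # xs @ [-1])}. 1 \<le> walk (1 # xs @ [-1]) k \<and>
           walk (1 # xs @ [-1]) k \<le> int (Suc h)"
  proof
    fix k assume k: "k \<in> {1..<length (1 # xs @ [-1])}"
    then have "walk (1 # xs @ [-1]) k = 1 + walk xs (k - 1)"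
      by (intro walk_wrap) auto
    moreover have "0 \<le> walk xs (k - 1) \<and> walk xs (k - 1) \<le> int h"
      using M k by (auto simp: Mprop_def)
    ultimately show "1 \<le> walk (1 # xs @ [-1]) k \<and> walk (1 # xs @ [-1]) k \<le> int (Suc h)"
      by simp
  qed
  moreover have "walk (1 # xs @ [-1]) (length (1 # xs @ [-1])) = 0"
    using M walk_wrap_end[of xs] by (simp add: Mprop_def)
  ultimately show "Eprop (Suc h) (1 # xs @ [-1])" using M by (auto simp: Eprop_def Mprop_def)
qed

lemma Eprop_len2: "Eprop h es \<Longrightarrow> 2 \<le> length es"
proof (rule ccontr)
  assume E: "Eprop h es" and "\<not> 2 \<le> length es"
  then have l: "length es = 1" by (auto simp: Eprop_def)
  then have "walk es 1 = es ! 0" using walk_Suc[of 0 es] by simp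
  moreover have "es ! 0 = 1 \<or> es ! 0 = -1" using pm_cases[of es 0] E l by (auto simp: Eprop_def)
  ultimately show False using E l by (auto simp: Eprop_def)
qed

lemma Eprop_shape:
  assumes E: "Eprop h es"
  shows "\<exists>xs. es = 1 # xs @ [-1]"
proof -
  have l: "2 \<le> length es" by (rule Eprop_len2[OF E])
  have pm: "set es \<subseteq> {-1, 1}" using E by (simp add: Eprop_def)
  have w1: "walk es 1 = es ! 0" using walk_Suc[of 0 es] l by (cases es) auto
  have "1 \<le> walk es 1" using E l by (auto simp: Eprop_def)
  then have h0: "es ! 0 = 1" using w1 pm_cases[OF pm, of 0] l by fastforce
  let ?m = "length es - 1"
  have "walk es (Suc ?m) = walk es ?m + es ! ?m"
    using l by (intro walk_Suc) simp
  moreover have "Suc ?m = length es" using l by simp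
  moreover have "?m \<in> {1..<length es}" using l by (simp; arith)
  then have "1 \<le> walk es ?m" using E unfolding Eprop_def by blast
  moreover have "es ! ?m = 1 \<or> es ! ?m = -1" using pm_cases[OF pm, of ?m] l by simp
  ultimately have hl: "es ! ?m = -1" using E by (auto simp: Eprop_def)
  obtain e rest where er: "es = e # rest" using l by (cases es) auto
  have "rest \<noteq> []" using l er by auto
  then have "rest = butlast rest @ [last rest]" by simp
  moreover have "e = 1" using h0 er by simp
  moreover have "last rest = -1" using hl er \<open>rest \<noteq> []\<close> by (simp add: last_conv_nth)
  ultimately have "es = 1 # butlast rest @ [-1]" using er by metis
  then show ?thesis by blast
qed

lemma Eset_small: "n < 2 \<Longrightarrow> Eset h n = {}"
  using Eprop_len2 by (fastforce simp: Eset_def)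

lemma Eset_Suc: "2 \<le> n \<Longrightarrow> Eset (Suc h) n = (\<lambda>xs. 1 # xs @ [-1]) ` Mset h (n - 2)"
proof (intro equalityI subsetI)
  fix es assume "es \<in> Eset (Suc h) n"
  then have E: "Eprop (Suc h) es" and ln: "length es = n" by (auto simp: Eset_def)
  obtain xs where xs: "es = 1 # xs @ [-1]" using Eprop_shape[OF E] by blast
  then have "Mprop h xs" using E Eprop_wrap by simp
  moreover have "length xs = n - 2" using ln xs by simp
  ultimately show "es \<in> (\<lambda>xs. 1 # xs @ [-1]) ` Mset h (n - 2)" using xs by (auto simp: Mset_def)
next
  fix es assume "es \<in> (\<lambda>xs. 1 # xs @ [-1]) ` Mset h (n - 2)" "2 \<le> n"
  then obtain xs where "es = 1 # xs @ [-1]" "Mprop h xs" "length xs = n - 2"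
    by (auto simp: Mset_def)
  then show "es \<in> Eset (Suc h) n" using Eprop_wrap \<open>2 \<le> n\<close> by (auto simp: Eset_def)
qed

lemma E_prefix_eq:
  assumes E: "Eprop h E" and E': "Eprop h E'" and eq: "E @ v = E' @ v'"
  shows "E = E' \<and> v = v'"
proof -
  have main: "\<not> length A < length B" if A: "Eprop h A" and B: "Eprop h B" and
    eqAB: "A @ w = B @ w'" for A B w w'
  proof
    assume lt: "length A < length B"
    have "take (length A) (A @ w) = take (length A) (B @ w')" using eqAB by simp
    then have tk: "take (length A) B = A" using lt by simp
    have "walk B (length A) = walk A (length A)" unfolding walk_def using tk by simp
    also have "\<dots> = 0" using A by (simp add: Eprop_def)
    finally have "walk B (length A) = 0" .
    moreover have "length A \<in> {1..<length B}" using lt A by (auto simp: Eprop_def)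
    moreover have "1 \<le> walk B (length A)" using B \<open>length A \<in> {1..<length B}\<close>
      unfolding Eprop_def by blast
    ultimately show False by simp
  qed
  have "length E = length E'" using main[OF E E' eq] main[OF E' E eq[symmetric]] by simp
  then show ?thesis using eq by simp
qed

lemma M_concat:
  assumes E: "Eprop h E" and M: "Mprop h v"
  shows "Mprop h (E @ v)"
proof -
  have sE: "sum_list E = 0" using E walk_ge[of E "length E"] by (simp add: Eprop_def)
  have "0 \<le> walk (E @ v) j \<and> walk (E @ v) j \<le> int h" if "j \<le> length (E @ v)" for j
  proof (cases "j \<le> length E")
    case True
    have "walk (E @ v) j = walk E j" using True by (simp add: walk_append)
    moreover have "0 \<le> walk E j \<and> walk E j \<le> int h"
    proof -
      consider "j = 0" | "j \<in> {1..<length E}" | "j = length E" using True by fastforce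
      then show ?thesis
      proof cases
        case 1 then show ?thesis by simp
      next
        case 2
        then have "1 \<le> walk E j \<and> walk E j \<le> int h" using E unfolding Eprop_def by blast
        then show ?thesis by simp
      next
        case 3
        then have "walk E j = 0" using E unfolding Eprop_def by blast
        then show ?thesis by simp
      qed
    qed
    ultimately show ?thesis by simp
  next
    case False
    then have "walk (E @ v) j = walk v (j - length E)" using sE walk_ge[of E j]
      by (simp add: walk_append)
    moreover have "j - length E \<le> length v" using that by simp
    ultimately show ?thesis using M by (auto simp: Mprop_def)
  qed
  moreover have "walk (E @ v) (length (E @ v)) = 0"
    using sE M walk_ge[of E "length (E @ v)"] by (simp add: walk_append Mprop_def)
  moreover have "set (E @ v) \<subseteq> {-1, 1}" using E M by (auto simp: Eprop_def Mprop_def)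
  ultimately show ?thesis by (simp add: Mprop_def)
qed

lemma M_split:
  assumes M: "Mprop h xs" and ne: "xs \<noteq> []"
  shows "\<exists>k. Eprop h (take k xs) \<and> Mprop h (drop k xs)"
proof -
  define P where "P = (\<lambda>k. 1 \<le> k \<and> walk xs k = 0)"
  have Pn: "P (length xs)" using M ne by (auto simp: P_def Mprop_def Suc_le_eq)
  define k where "k = (LEAST k. P k)"
  have Pk: "P k" unfolding k_def by (rule LeastI[of P, OF Pn])
  have kle: "k \<le> length xs" unfolding k_def by (rule Least_le[of P, OF Pn])
  have notP: "\<not> P j" if "j < k" for j using not_less_Least[of j P] that k_def by simp
  let ?E = "take k xs" and ?v = "drop k xs"
  have lenE: "length ?E = k" using kle by simp
  have wE: "walk ?E j = walk xs j" if "j \<le> k" for j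
    using that by (simp add: walk_def min_def)
  have "Eprop h ?E"
  proof -
    have "1 \<le> walk ?E j \<and> walk ?E j \<le> int h" if j: "j \<in> {1..<k}" for j
    proof -
      have "0 \<le> walk xs j \<and> walk xs j \<le> int h" using M j kle by (auto simp: Mprop_def)
      moreover have "walk xs j \<noteq> 0" using notP[of j] j by (auto simp: P_def)
      ultimately show ?thesis using wE[of j] j by auto
    qed
    moreover have "walk ?E k = 0" using wE[of k] Pk by (simp add: P_def)
    moreover have "set ?E \<subseteq> {-1, 1}" using M by (meson Mprop_def order_trans set_take_subset)
    ultimately show ?thesis using Pk lenE by (simp add: Eprop_def P_def)
  qed
  moreover have "Mprop h ?v"
  proof -
    have sE: "sum_list ?E = 0" using wE[of k] Pk walk_ge[of ?E k] lenE by (simp add: P_def)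
    have wv: "walk ?v j = walk xs (k + j)" for j
    proof -
      have "walk xs (k + j) = walk (?E @ ?v) (k + j)" by simp
      also have "\<dots> = walk ?E (k + j) + walk ?v j" by (simp only: walk_append lenE) simp
      also have "walk ?E (k + j) = 0" using sE walk_ge[of ?E "k + j"] lenE by simp
      finally show ?thesis by simp
    qed
    have "0 \<le> walk ?v j \<and> walk ?v j \<le> int h" if "j \<le> length ?v" for j
    proof -
      have "k + j \<le> length xs" using that kle by simp
      then have "0 \<le> walk xs (k + j) \<and> walk xs (k + j) \<le> int h" using M unfolding Mprop_def by blast
      then show ?thesis using wv[of j] by simp
    qed
    moreover have "walk ?v (length ?v) = 0" using wv[of "length ?v"] M kle by (simp add: Mprop_def)
    moreover have "set ?v \<subseteq> {-1, 1}" using M by (meson Mprop_def order_trans set_drop_subset)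
    ultimately show ?thesis by (simp add: Mprop_def)
  qed
  ultimately show ?thesis by blast
qed

lemma Mne_sum:
  fixes g :: "int list \<Rightarrow> real"
  shows "(\<Sum>xs\<in>Mne h n. g xs) = (\<Sum>k\<le>n. \<Sum>E\<in>Eset h k. \<Sum>v\<in>Mset h (n - k). g (E @ v))"
proof -
  define Sig where "Sig = (SIGMA k:{..n}. Eset h k \<times> Mset h (n - k))"
  have "(\<Sum>k\<le>n. \<Sum>E\<in>Eset h k. \<Sum>v\<in>Mset h (n - k). g (E @ v))
      = (\<Sum>k\<le>n. \<Sum>p\<in>Eset h k \<times> Mset h (n - k). g (fst p @ snd p))"
    by (simp add: sum.cartesian_product case_prod_beta)
  also have "\<dots> = (\<Sum>q\<in>Sig. g (fst (snd q) @ snd (snd q)))"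
    unfolding Sig_def
    by (subst sum.Sigma) (auto simp: finite_Eset finite_Mset case_prod_beta)
  also have "\<dots> = (\<Sum>xs\<in>Mne h n. g xs)"
  proof (rule sum.reindex_bij_betw)
    show "bij_betw (\<lambda>q. fst (snd q) @ snd (snd q)) Sig (Mne h n)"
    proof (rule bij_betwI')
      fix x y assume xS: "x \<in> Sig" and yS: "y \<in> Sig"
      obtain k E v where x: "x = (k, E, v)" by (cases x) auto
      obtain k' E' v' where y: "y = (k', E', v')" by (cases y) auto
      have hx: "Eprop h E" "length E = k" using xS x by (auto simp: Sig_def Eset_def)
      have hy: "Eprop h E'" "length E' = k'" using yS y by (auto simp: Sig_def Eset_def)
      show "(fst (snd x) @ snd (snd x) = fst (snd y) @ snd (snd y)) = (x = y)"
      proof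
        assume "fst (snd x) @ snd (snd x) = fst (snd y) @ snd (snd y)"
        then have "E @ v = E' @ v'" using x y by simp
        then have "E = E' \<and> v = v'" using E_prefix_eq[OF hx(1) hy(1)] by blast
        then show "x = y" using x y hx hy by simp
      qed simp
    next
      fix x assume xS: "x \<in> Sig"
      obtain k E v where x: "x = (k, E, v)" by (cases x) auto
      have "Eprop h E" "length E = k" "Mprop h v" "length v = n - k" "k \<le> n"
        using xS x by (auto simp: Sig_def Eset_def Mset_def)
      then have "Mprop h (E @ v)" "E @ v \<noteq> []" "length (E @ v) = n"
        using M_concat by (auto simp: Eprop_def)
      then show "fst (snd x) @ snd (snd x) \<in> Mne h n" using x by (simp add: Mne_def)
    next
      fix xs assume "xs \<in> Mne h n"
      then have M: "Mprop h xs" and ne: "xs \<noteq> []" and ln: "length xs = n" by (auto simp: Mne_def)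
      obtain k0 where k0: "Eprop h (take k0 xs)" "Mprop h (drop k0 xs)" using M_split[OF M ne] by blast
      define k where "k = min k0 n"
      have kn: "k \<le> n" by (simp add: k_def)
      have "take k xs = take k0 xs" "drop k xs = drop k0 xs" using ln by (auto simp: k_def min_def)
      then have k: "Eprop h (take k xs)" "Mprop h (drop k xs)" using k0 by simp_all
      have "length (take k xs) = k" using kn ln by simp
      then have "(k, take k xs, drop k xs) \<in> Sig"
        using k kn ln by (auto simp: Sig_def Eset_def Mset_def)
      moreover have "xs = fst (snd (k, take k xs, drop k xs)) @ snd (snd (k, take k xs, drop k xs))"
        by simp
      ultimately show "\<exists>x\<in>Sig. xs = fst (snd x) @ snd (snd x)" by blast
    qed
  qed
  finally show ?thesis by simp
qed

lemma exc_pos: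
  assumes "es \<in> exc_paths n N" "es ! 0 = 1"
  shows "es \<in> Eset N n"
proof -
  have pm: "set es \<subseteq> {-1, 1}" and ln: "length es = n" and n1: "1 \<le> n"
    and w0: "walk es n = 0" and nz: "\<forall>k\<in>{1..<n}. walk es k \<noteq> 0"
    and bd: "\<forall>k\<in>{1..n}. \<bar>walk es k\<bar> \<le> int N"
    using assms(1) by (auto simp: exc_paths_def)
  have pos: "Suc k < n \<Longrightarrow> 1 \<le> walk es (Suc k)" for k
  proof (induction k)
    case 0 then show ?case using walk_Suc[of 0 es] ln assms(2) by simp
  next
    case (Suc k)
    have "walk es (Suc (Suc k)) = walk es (Suc k) + es ! Suc k" using Suc.prems ln by (intro walk_Suc) simp
    moreover have "es ! Suc k = 1 \<or> es ! Suc k = -1" using pm_cases[OF pm, of "Suc k"] Suc.prems ln by simp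
    moreover have "Suc (Suc k) \<in> {1..<n}" using Suc.prems by simp
    then have "walk es (Suc (Suc k)) \<noteq> 0" using nz by blast
    ultimately show ?case using Suc by auto
  qed
  have "1 \<le> walk es k \<and> walk es k \<le> int N" if "k \<in> {1..<n}" for k
  proof -
    have "Suc (k - 1) = k" "k < n" using that by auto
    then have "1 \<le> walk es k" using pos[of "k - 1"] by simp
    moreover have "k \<in> {1..n}" using that by simp
    then have "\<bar>walk es k\<bar> \<le> int N" using bd by blast
    ultimately show ?thesis by simp
  qed
  then show ?thesis using pm ln n1 w0 by (auto simp: Eset_def Eprop_def)
qed

lemma exc_paths_eq:
  "exc_paths n N = Eset N n \<union> (map uminus) ` Eset N n"
proof (intro equalityI subsetI)
  fix es assume es: "es \<in> exc_paths n N"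
  then have pm: "set es \<subseteq> {-1, 1}" and n1: "1 \<le> n" and ln: "length es = n"
    by (auto simp: exc_paths_def)
  have "es ! 0 = 1 \<or> es ! 0 = -1" using pm_cases[OF pm, of 0] n1 ln by simp
  then show "es \<in> Eset N n \<union> (map uminus) ` Eset N n"
  proof
    assume "es ! 0 = 1" then show ?thesis using exc_pos es by blast
  next
    assume h: "es ! 0 = -1"
    have "map uminus es \<in> exc_paths n N"
      using es by (auto simp: exc_paths_def walk_neg)
    moreover have "map uminus es ! 0 = 1" using h n1 ln by simp
    ultimately have "map uminus es \<in> Eset N n" by (rule exc_pos)
    moreover have "es = map uminus (map uminus es)" by simp
    ultimately show ?thesis by blast
  qed
next
  have A: "es \<in> exc_paths n N" if "es \<in> Eset N n" for es
  proof -
    have "\<bar>walk es k\<bar> \<le> int N" if "k \<in> {1..n}" for k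
    proof (cases "k = n")
      case True then show ?thesis using \<open>es \<in> Eset N n\<close> by (auto simp: Eset_def Eprop_def)
    next
      case False
      then have "k \<in> {1..<length es}" using that \<open>es \<in> Eset N n\<close> by (auto simp: Eset_def)
      then have "1 \<le> walk es k \<and> walk es k \<le> int N" using \<open>es \<in> Eset N n\<close>
        unfolding Eset_def Eprop_def by blast
      then show ?thesis by simp
    qed
    then show ?thesis using \<open>es \<in> Eset N n\<close> by (fastforce simp: Eset_def Eprop_def exc_paths_def)
  qed
  fix es assume "es \<in> Eset N n \<union> (map uminus) ` Eset N n"
  then show "es \<in> exc_paths n N"
  proof
    assume "es \<in> Eset N n" then show ?thesis by (rule A)
  next
    assume "es \<in> (map uminus) ` Eset N n"
    then obtain es' where "es = map uminus es'" "es' \<in> exc_paths n N" using A by blast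
    then show ?thesis by (auto simp: exc_paths_def walk_neg)
  qed
qed

lemma exc_disjoint: "Eset N n \<inter> (map uminus) ` Eset N n = {}"
proof -
  { fix es assume "es \<in> Eset N n" "map uminus es \<in> Eset N n"
    then obtain xs ys where "es = 1 # xs @ [-1]" "map uminus es = 1 # ys @ [-1]"
      using Eprop_shape by (metis Eset_def mem_Collect_eq)
    then have False by simp }
  then show ?thesis by auto
qed




definition Efps :: "real \<Rightarrow> real \<Rightarrow> real \<Rightarrow> nat \<Rightarrow> int option \<Rightarrow> int option \<Rightarrow> real fps" where
  "Efps a r y h l rc = Abs_fps (\<lambda>n. \<Sum>es\<in>Eset h n. wt a r y l rc es)"

definition Mfps :: "real \<Rightarrow> real \<Rightarrow> real \<Rightarrow> nat \<Rightarrow> int option \<Rightarrow> real fps" where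
  "Mfps a r y h l = Abs_fps (\<lambda>n. \<Sum>xs\<in>Mne h n. wt a r y l (Some (-1)) xs)"

lemma Mne_hd: "xs \<in> Mne h n \<Longrightarrow> hd xs = 1"
proof -
  assume "xs \<in> Mne h n"
  then have M: "Mprop h xs" and ne: "xs \<noteq> []" by (auto simp: Mne_def)
  have "1 \<le> length xs" using ne by (cases xs) auto
  then have "0 \<le> walk xs 1" using M unfolding Mprop_def by blast
  moreover have "walk xs 1 = xs ! 0" using walk_Suc[of 0 xs] ne by (cases xs) auto
  moreover have "xs ! 0 = 1 \<or> xs ! 0 = -1" using pm_cases[of xs 0] M ne by (auto simp: Mprop_def)
  ultimately show "hd xs = 1" using ne by (auto simp: hd_conv_nth)
qed

lemma Mne_last: "xs \<in> Mne h n \<Longrightarrow> last xs = -1"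
proof -
  assume "xs \<in> Mne h n"
  then have M: "Mprop h xs" and ne: "xs \<noteq> []" by (auto simp: Mne_def)
  let ?m = "length xs - 1"
  have m: "Suc ?m = length xs" "?m < length xs" using ne by (cases xs; auto)+
  have "?m \<le> length xs" by simp
  then have "0 \<le> walk xs ?m" using M unfolding Mprop_def by blast
  moreover have "walk xs (Suc ?m) = walk xs ?m + xs ! ?m" using m(2) by (rule walk_Suc)
  moreover have "walk xs (length xs) = 0" using M by (simp add: Mprop_def)
  moreover have "xs ! ?m = 1 \<or> xs ! ?m = -1" using pm_cases[of xs ?m] M m(2) by (auto simp: Mprop_def)
  ultimately have "xs ! ?m = -1" using m(1) by auto
  then show "last xs = -1" using ne by (simp add: last_conv_nth)
qed

lemma Eset_last: "E \<in> Eset h k \<Longrightarrow> E \<noteq> [] \<and> last E = -1"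
  using Eprop_shape by (fastforce simp: Eset_def)

lemma inner_sum:
  assumes E: "E \<in> Eset h k"
  shows "(\<Sum>v\<in>Mset h m. wt a r y l (Some (-1)) (E @ v)) =
     (if m = 0 then wt a r y l (Some (-1)) E else 0) +
     wt a r y l (Some 1) E * (\<Sum>v\<in>Mne h m. wt a r y (Some (-1)) (Some (-1)) v)"
proof (cases "m = 0")
  case True
  then have "Mne h m = {}" by (auto simp: Mne_def)
  then show ?thesis using True by (simp add: Mset_eq nxt_def)
next
  case False
  have le: "E \<noteq> []" "last E = -1" using Eset_last[OF E] by auto
  have "wt a r y l (Some (-1)) (E @ v) = wt a r y l (Some 1) E * wt a r y (Some (-1)) (Some (-1)) v"
    if "v \<in> Mne h m" for v
  proof -
    have "v \<noteq> []" "hd v = 1" using that Mne_hd[OF that] by (auto simp: Mne_def)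
    then have "nxt v (Some (-1)) = Some 1" by (cases v) (auto simp: nxt_def)
    then show ?thesis using le by (simp add: wt_append)
  qed
  then show ?thesis using False by (simp add: Mset_eq sum_distrib_left)
qed

lemma Mfps_rec:
  "Mfps a r y h l = Efps a r y h l (Some (-1)) + Efps a r y h l (Some 1) * Mfps a r y h (Some (-1))"
proof (rule fps_ext)
  fix n
  have "(Mfps a r y h l) $ n = (\<Sum>k\<le>n. \<Sum>E\<in>Eset h k. \<Sum>v\<in>Mset h (n - k). wt a r y l (Some (-1)) (E @ v))"
    by (simp add: Mfps_def Mne_sum)
  also have "\<dots> = (\<Sum>k\<le>n. \<Sum>E\<in>Eset h k.
      (if n - k = 0 then wt a r y l (Some (-1)) E else 0) +
       wt a r y l (Some 1) E * (\<Sum>v\<in>Mne h (n - k). wt a r y (Some (-1)) (Some (-1)) v))"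
    by (intro sum.cong refl inner_sum) simp
  also have "\<dots> = (\<Sum>k\<le>n. \<Sum>E\<in>Eset h k. (if n - k = 0 then wt a r y l (Some (-1)) E else 0)) +
      (\<Sum>k\<le>n. \<Sum>E\<in>Eset h k. wt a r y l (Some 1) E *
          (\<Sum>v\<in>Mne h (n - k). wt a r y (Some (-1)) (Some (-1)) v))"
    by (simp only: sum.distrib)
  also have "(\<Sum>k\<le>n. \<Sum>E\<in>Eset h k. (if n - k = 0 then wt a r y l (Some (-1)) E else 0))
      = (\<Sum>E\<in>Eset h n. wt a r y l (Some (-1)) E)"
  proof -
    have "(\<Sum>k\<le>n. \<Sum>E\<in>Eset h k. (if n - k = 0 then wt a r y l (Some (-1)) E else 0))
        = (\<Sum>k\<le>n. (if k = n then (\<Sum>E\<in>Eset h k. wt a r y l (Some (-1)) E) else 0))"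
      by (intro sum.cong refl) auto
    then show ?thesis by simp
  qed
  also have "(\<Sum>k\<le>n. \<Sum>E\<in>Eset h k. wt a r y l (Some 1) E *
          (\<Sum>v\<in>Mne h (n - k). wt a r y (Some (-1)) (Some (-1)) v)) =
      (\<Sum>k\<le>n. (\<Sum>E\<in>Eset h k. wt a r y l (Some 1) E) *
          (\<Sum>v\<in>Mne h (n - k). wt a r y (Some (-1)) (Some (-1)) v))"
    by (simp only: sum_distrib_right)
  finally show "(Mfps a r y h l) $ n =
     (Efps a r y h l (Some (-1)) + Efps a r y h l (Some 1) * Mfps a r y h (Some (-1))) $ n"
    by (simp add: Efps_def Mfps_def fps_mult_nth atMost_atLeast0)
qed

lemma Mfps_0: "Mfps a r y 0 l = 0"
  by (simp add: Mfps_def Mne_0 fps_eq_iff)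

lemma wrap_wt:
  assumes "xs \<in> Mne h m"
  shows "wt a r y l rc (1 # xs @ [-1]) = stepf a r y l 1 (Some 1) * a * wt a r y (Some 1) (Some (-1)) xs"
proof -
  have "xs \<noteq> []" using assms by (auto simp: Mne_def)
  have hd: "hd xs = 1" and lst: "last xs = -1" using Mne_hd[OF assms] Mne_last[OF assms] by auto
  have n1: "nxt xs (Some (-1)) = Some 1" using hd \<open>xs \<noteq> []\<close> by (cases xs) (auto simp: nxt_def)
  have "wt a r y l rc ((1 # xs) @ [-1]) =
      wt a r y l (nxt [-1] rc) (1 # xs) * wt a r y (Some (last (1 # xs))) rc [-1]"
    using wt_append[of a r y l rc "1 # xs" "[-1]"] by simp
  also have "nxt [-1] rc = Some (-1)" by (simp add: nxt_def)
  also have "last (1 # xs) = -1" using lst \<open>xs \<noteq> []\<close> by simp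
  also have "wt a r y (Some (-1)) rc [-1] = a" by (simp add: stepf_def trf_def)
  also have "wt a r y l (Some (-1)) (1 # xs) = stepf a r y l 1 (Some 1) * wt a r y (Some 1) (Some (-1)) xs"
    using n1 by simp
  finally show ?thesis by simp
qed

lemma Efps_Suc:
  "Efps a r y (Suc h) l rc = fps_X ^ 2 * (fps_const (wt a r y l rc [1, -1]) +
      fps_const (stepf a r y l 1 (Some 1) * a) * Mfps a r y h (Some 1))"
proof (rule fps_ext)
  fix n
  show "Efps a r y (Suc h) l rc $ n = (fps_X ^ 2 * (fps_const (wt a r y l rc [1, -1]) +
      fps_const (stepf a r y l 1 (Some 1) * a) * Mfps a r y h (Some 1))) $ n"
  proof (cases "n < 2")
    case True
    then show ?thesis by (simp add: Efps_def Eset_small fps_X_power_mult_nth)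
  next
    case False
    have inj: "inj_on (\<lambda>xs::int list. 1 # xs @ [-1]) (Mset h (n - 2))" by (auto simp: inj_on_def)
    have "Efps a r y (Suc h) l rc $ n = (\<Sum>xs\<in>Mset h (n - 2). wt a r y l rc (1 # xs @ [-1]))"
      using False by (simp add: Efps_def Eset_Suc sum.reindex[OF inj])
    also have "\<dots> = (if n = 2 then wt a r y l rc [1, -1] else
        stepf a r y l 1 (Some 1) * a * (\<Sum>xs\<in>Mne h (n - 2). wt a r y (Some 1) (Some (-1)) xs))"
    proof (cases "n = 2")
      case True then show ?thesis by (simp add: Mset_eq)
    next
      case F2: False
      then have "n - 2 \<noteq> 0" using False by simp
      have "(\<Sum>xs\<in>Mne h (n - 2). wt a r y l rc (1 # xs @ [-1])) =
          (\<Sum>xs\<in>Mne h (n - 2). stepf a r y l 1 (Some 1) * a * wt a r y (Some 1) (Some (-1)) xs)"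
        by (rule sum.cong[OF refl]) (rule wrap_wt)
      then show ?thesis using F2 \<open>n - 2 \<noteq> 0\<close> by (simp add: Mset_eq sum_distrib_left)
    qed
    also have "\<dots> = (fps_X ^ 2 * (fps_const (wt a r y l rc [1, -1]) +
      fps_const (stepf a r y l 1 (Some 1) * a) * Mfps a r y h (Some 1))) $ n"
    proof (cases "n = 2")
      case True then show ?thesis by (simp add: fps_X_power_mult_nth Mfps_def Mne_def)
    next
      case F2: False
      then show ?thesis using False by (simp add: fps_X_power_mult_nth Mfps_def)
    qed
    finally show ?thesis .
  qed
qed

definition Gfps :: "real \<Rightarrow> real \<Rightarrow> real \<Rightarrow> nat \<Rightarrow> real fps" where
  "Gfps a r y N = Abs_fps (\<lambda>n.
     (\<Sum>es\<in>exc_paths n N. path_prob a es * r ^ num_runs es * y ^ num_short_runs es))"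

lemma Gfps_E: "Gfps a r y N = fps_const 2 * Efps a r y N None None"
proof (rule fps_ext)
  fix n
  have wp: "path_prob a es * r ^ num_runs es * y ^ num_short_runs es = wt a r y None None es"
    if "es \<in> exc_paths n N" for es
  proof -
    have "es \<noteq> []" using that by (auto simp: exc_paths_def)
    then obtain e rest where "es = e # rest" by (cases es) auto
    then show ?thesis by (simp only: wt_path)
  qed
  have inj: "inj_on (map (uminus :: int \<Rightarrow> int)) (Eset N n)" by (auto simp: inj_on_def)
  have "Gfps a r y N $ n = (\<Sum>es\<in>exc_paths n N. wt a r y None None es)"
    using wp by (simp add: Gfps_def)
  also have "\<dots> = (\<Sum>es\<in>Eset N n. wt a r y None None es) +
      (\<Sum>es\<in>(map uminus) ` Eset N n. wt a r y None None es)"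
    unfolding exc_paths_eq
    by (rule sum.union_disjoint) (auto simp: finite_Eset exc_disjoint)
  also have "(\<Sum>es\<in>(map uminus) ` Eset N n. wt a r y None None es) =
      (\<Sum>es\<in>Eset N n. wt a r y None None es)"
    using wt_neg[of a r y None None] by (simp add: sum.reindex[OF inj])
  finally show "Gfps a r y N $ n = (fps_const 2 * Efps a r y N None None) $ n"
    by (simp add: Efps_def)
qed




lemmas fcs = fps_const_mult[symmetric] fps_const_sub[symmetric] fps_const_add[symmetric]
  fps_const_power[symmetric] fps_const_neg[symmetric]
lemma fc_numeral: "fps_const (numeral k) = numeral k"
  by (simp add: numeral_fps_const)
lemmas fcs_del = fps_const_mult fps_const_sub fps_const_add fps_const_power fps_const_neg

fun PQ :: "real \<Rightarrow> real \<Rightarrow> real \<Rightarrow> nat \<Rightarrow> real fps \<times> real fps" where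
  "PQ a r y 0 = (0, 1)"
| "PQ a r y (Suc h) = (case PQ a r y h of (P, Q) \<Rightarrow>
     (fps_X^2 * fps_const a * (fps_const ((1-a)*r) * Q +
         fps_const a * (1 - fps_const ((1-a)^2*r^2*(1-y)^2) * fps_X^2) * P),
      (1 - fps_const ((1-a)^2*r^2*y^2) * fps_X^2) * Q - fps_const ((1-a)*r*a) * fps_X^2 * P))"

definition Pf where "Pf a r y h = fst (PQ a r y h)"
definition Qf where "Qf a r y h = snd (PQ a r y h)"

lemma Pf_Suc: "Pf a r y (Suc h) = fps_X^2 * fps_const a * (fps_const ((1-a)*r) * Qf a r y h +
         fps_const a * (1 - fps_const ((1-a)^2*r^2*(1-y)^2) * fps_X^2) * Pf a r y h)"
  by (simp add: Pf_def Qf_def split: prod.split)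
lemma Qf_Suc: "Qf a r y (Suc h) = (1 - fps_const ((1-a)^2*r^2*y^2) * fps_X^2) * Qf a r y h -
     fps_const ((1-a)*r*a) * fps_X^2 * Pf a r y h"
  by (simp add: Pf_def Qf_def split: prod.split)
lemma PQ_0: "Pf a r y 0 = 0" "Qf a r y 0 = 1"
  by (simp_all add: Pf_def Qf_def)

lemma key_identity:
  fixes s X ca cr cy :: "real fps"
  shows "(X^2 * (ca * ((1-ca)*cr) + ca * ca * s)) * (1 - X^2 * ((1-ca)*cr*cy*((1-ca)*cr*cy) + (1-ca)*cr*ca * s))
    + (X^2 * (ca * ((1-ca)*cr*cy) + ca * ca * s)) * (X^2 * ((1-ca)*cr*cy*((1-ca)*cr) + (1-ca)*cr*ca * s))
    = X^2 * ca * ((1-ca)*cr + ca * (1 - ((1-ca)^2*cr^2*(1-cy)^2) * X^2) * s)"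
  by algebra

lemma S_Q: "Mfps a r y h (Some 1) * Qf a r y h = Pf a r y h"
proof (induction h)
  case 0 then show ?case by (simp add: Mfps_0 PQ_0)
next
  case (Suc h)
  define s where "s = Mfps a r y h (Some 1)"
  define T where "T = Mfps a r y (Suc h) (Some (-1))"
  define S where "S = Mfps a r y (Suc h) (Some 1)"
  define X :: "real fps" where "X = fps_X"
  define ca where "ca = fps_const a"
  define cr where "cr = fps_const r"
  define cy where "cy = fps_const y"
  define A where "A = X^2 * ((1-ca)*cr*cy*((1-ca)*cr*cy) + (1-ca)*cr*ca * s)"
  define B where "B = X^2 * (ca * ((1-ca)*cr*cy) + ca * ca * s)"
  define C where "C = X^2 * ((1-ca)*cr*cy*((1-ca)*cr) + (1-ca)*cr*ca * s)"
  define D where "D = X^2 * (ca * ((1-ca)*cr) + ca * ca * s)"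
  have eA: "Efps a r y (Suc h) (Some (-1)) (Some 1) = A"
    unfolding A_def s_def X_def ca_def cr_def cy_def
    by (simp del: fcs_del add: Efps_Suc stepf_def trf_def nxt_def fcs)
  have eB: "Efps a r y (Suc h) (Some 1) (Some 1) = B"
    unfolding B_def s_def X_def ca_def cr_def cy_def
    by (simp del: fcs_del add: Efps_Suc stepf_def trf_def nxt_def fcs)
  have eC: "Efps a r y (Suc h) (Some (-1)) (Some (-1)) = C"
    unfolding C_def s_def X_def ca_def cr_def cy_def
    by (simp del: fcs_del add: Efps_Suc stepf_def trf_def nxt_def fcs)
  have eD: "Efps a r y (Suc h) (Some 1) (Some (-1)) = D"
    unfolding D_def s_def X_def ca_def cr_def cy_def
    by (simp del: fcs_del add: Efps_Suc stepf_def trf_def nxt_def fcs)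
  have hT: "T = C + A * T" using Mfps_rec[of a r y "Suc h" "Some (-1)"] eA eC by (simp add: T_def)
  have hS: "S = D + B * T" using Mfps_rec[of a r y "Suc h" "Some 1"] eB eD by (simp add: T_def S_def)
  have TA0: "T * (1 - A) = T - A * T" by (simp add: algebra_simps)
  have TA: "T * (1 - A) = C" unfolding TA0 using hT by (metis add_diff_cancel_right')
  have SA0: "S * (1 - A) = D * (1 - A) + B * (T * (1 - A))" unfolding hS by (simp add: algebra_simps)
  have SA: "S * (1 - A) = D * (1 - A) + B * C" using SA0 TA by simp
  have key: "D * (1 - A) + B * C = X^2 * ca * ((1-ca)*cr + ca * (1 - ((1-ca)^2*cr^2*(1-cy)^2) * X^2) * s)"
    unfolding A_def B_def C_def D_def by (rule key_identity)
  have IH: "s * Qf a r y h = Pf a r y h" using Suc.IH s_def by simp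
  have Q1: "Qf a r y (Suc h) = (1 - A) * Qf a r y h"
    unfolding Qf_Suc A_def X_def ca_def cr_def cy_def IH[symmetric]
    by (simp del: fcs_del add: fcs algebra_simps power2_eq_square fc_numeral)
  have P1: "Pf a r y (Suc h) = X^2 * ca * ((1-ca)*cr + ca * (1 - ((1-ca)^2*cr^2*(1-cy)^2) * X^2) * s) * Qf a r y h"
    unfolding Pf_Suc X_def ca_def cr_def cy_def IH[symmetric]
    by (simp del: fcs_del add: fcs algebra_simps fc_numeral)
  have "S * Qf a r y (Suc h) = (S * (1 - A)) * Qf a r y h" using Q1 by (simp add: mult.assoc)
  also have "\<dots> = Pf a r y (Suc h)" using SA key P1 by simp
  finally show ?case by (simp add: S_def)
qed




lemma two_step_rec:
  fixes P0 Q0 m11 m12 m21 m22 :: "real fps"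
  shows "m11 * (m11 * P0 + m12 * Q0) + m12 * (m21 * P0 + m22 * Q0) =
     (m11 + m22) * (m11 * P0 + m12 * Q0) - (m11 * m22 - m12 * m21) * P0"
    "m21 * (m11 * P0 + m12 * Q0) + m22 * (m21 * P0 + m22 * Q0) =
     (m11 + m22) * (m21 * P0 + m22 * Q0) - (m11 * m22 - m12 * m21) * Q0"
  by algebra+

context fixes a r y :: real begin

definition "m11 = fps_X^2 * fps_const a * (fps_const a * (1 - fps_const ((1-a)^2*r^2*(1-y)^2) * fps_X^2))"
definition "m12 = fps_X^2 * fps_const a * fps_const ((1-a)*r)"
definition "m21 = - (fps_const ((1-a)*r*a) * fps_X^2)"
definition "m22 = 1 - fps_const ((1-a)^2*r^2*y^2) * fps_X^2"

lemma Pf_m: "Pf a r y (Suc h) = m11 * Pf a r y h + m12 * Qf a r y h"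
  unfolding Pf_Suc m11_def m12_def by (simp add: algebra_simps)
lemma Qf_m: "Qf a r y (Suc h) = m21 * Pf a r y h + m22 * Qf a r y h"
  unfolding Qf_Suc m21_def m22_def by (simp add: algebra_simps)

lemma beta_m: "beta_a a r y = m11 + m22"
  unfolding beta_a_def m11_def m22_def
  by (simp del: fcs_del add: fcs fc_numeral) algebra

lemma x_m: "x_a a r y = m11 * m22 - m12 * m21"
  unfolding x_a_def tau_a_def m11_def m12_def m21_def m22_def
  by (simp del: fcs_del add: fcs fc_numeral) algebra

lemma Pf_rec3: "Pf a r y (Suc (Suc n)) = beta_a a r y * Pf a r y (Suc n) - x_a a r y * Pf a r y n"
  unfolding beta_m x_m Pf_m[of "Suc n"] Pf_m[of n] Qf_m[of n] by (rule two_step_rec(1))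

lemma Qf_rec3: "Qf a r y (Suc (Suc n)) = beta_a a r y * Qf a r y (Suc n) - x_a a r y * Qf a r y n"
  unfolding beta_m x_m Qf_m[of "Suc n"] Pf_m[of n] Qf_m[of n] by (rule two_step_rec(2))

lemma tau0: "(tau_a a r y ^ 2) $ 0 = 1"
  by (simp add: fps_power_zeroth tau_a_def)

lemma x_nz: "a \<noteq> 0 \<Longrightarrow> x_a a r y \<noteq> 0"
proof
  assume a: "a \<noteq> 0" and "x_a a r y = 0"
  then have "fps_const (a^2) * (fps_X^2 * tau_a a r y ^ 2) = 0" by (simp add: x_a_def mult.assoc)
  moreover have "fps_const (a^2) \<noteq> (0::real fps)" using a by simp
  moreover have "tau_a a r y ^ 2 \<noteq> 0" using tau0 by (metis fps_zero_nth zero_neq_one)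
  moreover have "fps_X ^ 2 \<noteq> (0::real fps)" by simp
  ultimately show False by simp
qed

lemma x_w0: "a \<noteq> 0 \<Longrightarrow> x_a a r y * w_star a r y 0 = beta_a a r y - omega_a a r y"
proof -
  assume a: "a \<noteq> 0"
  define g where "g = (1 - fps_const ((1-a)^2*r^2*(1-y)^2) * fps_X^2) * inverse (tau_a a r y ^ 2)"
  have inv: "tau_a a r y ^ 2 * inverse (tau_a a r y ^ 2) = 1"
    using tau0 by (intro inverse_mult_eq_1') simp
  have "x_a a r y * g = fps_const (a^2) * fps_X^2 * (1 - fps_const ((1-a)^2*r^2*(1-y)^2) * fps_X^2) *
      (tau_a a r y ^ 2 * inverse (tau_a a r y ^ 2))"
    unfolding x_a_def g_def by (simp add: algebra_simps)
  also have "\<dots> = beta_a a r y - omega_a a r y"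
    unfolding inv beta_a_def omega_a_def
    by (simp del: fcs_del add: fcs fc_numeral) algebra
  finally have eq: "x_a a r y * g = beta_a a r y - omega_a a r y" .
  have "w_star a r y 0 = (x_a a r y * g) / x_a a r y" using eq by simp
  also have "\<dots> = g" using x_nz[OF a] by simp
  finally show ?thesis using eq by simp
qed

lemma w_Q: "a \<noteq> 0 \<Longrightarrow> w_star a r y (Suc n) = Qf a r y n \<and> w_star a r y (Suc (Suc n)) = Qf a r y (Suc n)"
proof (induction n)
  case 0
  have "w_star a r y (Suc (Suc 0)) = omega_a a r y" using x_w0[OF 0] by simp
  also have "\<dots> = Qf a r y (Suc 0)" by (simp add: Qf_Suc PQ_0 omega_a_def)
  finally show ?case by (simp add: PQ_0)
next
  case (Suc n)
  from Suc.IH[OF Suc.prems] have i1: "w_star a r y (Suc n) = Qf a r y n"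
    and i2: "w_star a r y (Suc (Suc n)) = Qf a r y (Suc n)" by auto
  have e: "w_star a r y (Suc (Suc (Suc n))) =
      beta_a a r y * w_star a r y (Suc (Suc n)) - x_a a r y * w_star a r y (Suc n)"
    by (rule w_star.simps(3))
  have "w_star a r y (Suc (Suc (Suc n))) = Qf a r y (Suc (Suc n))"
    unfolding e i1 i2 Qf_rec3[of n] by (rule refl)
  then show ?case using i2 by blast
qed

lemma x_q0: "x_a a r y * q_star a r y 0 =
   - fps_const (a^2) * fps_X^2 * fps_const (1 - y) *
      (fps_const (1 + y) + fps_const ((1 - a)^2 * r^2 * y^2 * (1 - y)) * fps_X^2)"
proof -
  have inv: "tau_a a r y ^ 2 * inverse (tau_a a r y ^ 2) = 1"
    using tau0 by (intro inverse_mult_eq_1') simp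
  have "q_star a r y 0 = - fps_const (1 - y) *
      (fps_const (1 + y) + fps_const ((1 - a)^2 * r^2 * y^2 * (1 - y)) * fps_X^2) * inverse (tau_a a r y ^ 2)"
    using tau0 by (simp add: fps_divide_unit)
  then have "x_a a r y * q_star a r y 0 = - fps_const (a^2) * fps_X^2 * fps_const (1 - y) *
      (fps_const (1 + y) + fps_const ((1 - a)^2 * r^2 * y^2 * (1 - y)) * fps_X^2) *
      (tau_a a r y ^ 2 * inverse (tau_a a r y ^ 2))"
    unfolding x_a_def by (simp only: ac_simps mult_minus_left mult_minus_right)
  then show ?thesis unfolding inv by simp
qed

definition "Vf n = fps_const ((1-a)*r*y^2) * Qf a r y n + fps_const a * Pf a r y n"

lemma Vf_rec3: "Vf (Suc (Suc n)) = beta_a a r y * Vf (Suc n) - x_a a r y * Vf n"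
  unfolding Vf_def Pf_rec3 Qf_rec3 by (simp add: algebra_simps)

lemma q_V: "a \<noteq> 0 \<Longrightarrow> fps_const ((1-a)*r) * q_star a r y (Suc n) = Vf n \<and>
    fps_const ((1-a)*r) * q_star a r y (Suc (Suc n)) = Vf (Suc n)"
proof (induction n)
  case 0
  have A: "fps_const ((1-a)*r) * q_star a r y (Suc 0) = Vf 0"
    by (simp add: Vf_def PQ_0)
  have "fps_const ((1-a)*r) * q_star a r y (Suc (Suc 0)) =
      fps_const ((1-a)*r) * (beta_a a r y * fps_const (y^2) - x_a a r y * q_star a r y 0)"
    by simp
  also have "\<dots> = Vf (Suc 0)"
    unfolding x_q0 Vf_def Pf_Suc Qf_Suc PQ_0 beta_a_def
    by (simp del: fcs_del add: fcs fc_numeral) algebra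
  finally show ?case using A by simp
next
  case (Suc n)
  have "fps_const ((1-a)*r) * q_star a r y (Suc (Suc (Suc n))) =
      beta_a a r y * (fps_const ((1-a)*r) * q_star a r y (Suc (Suc n))) -
      x_a a r y * (fps_const ((1-a)*r) * q_star a r y (Suc n))"
    by (simp add: algebra_simps)
  moreover from Suc.IH[OF Suc.prems] have
    i1: "fps_const ((1-a)*r) * q_star a r y (Suc n) = Vf n"
    and i2: "fps_const ((1-a)*r) * q_star a r y (Suc (Suc n)) = Vf (Suc n)" by auto
  ultimately have "fps_const ((1-a)*r) * q_star a r y (Suc (Suc (Suc n))) = Vf (Suc (Suc n))"
    unfolding Vf_rec3[of n] by simp
  then show ?case using i2 by blast
qed

lemma Qf0: "Qf a r y n $ 0 = 1"
  by (induction n) (simp_all add: PQ_0 Qf_Suc)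

end




lemma G_expr: "Gfps a r y (Suc h) = fps_X^2 * (fps_const ((1-a)*r^2*y^2) + fps_const (r*a) * Mfps a r y h (Some 1))"
  unfolding Gfps_E Efps_Suc
  by (simp add: stepf_def trf_def nxt_def algebra_simps power2_eq_square)

lemma G_Q: "Gfps a r y (Suc h) * Qf a r y h =
    fps_X^2 * (fps_const ((1-a)*r^2*y^2) * Qf a r y h + fps_const (r*a) * Pf a r y h)"
  unfolding G_expr S_Q[symmetric] by (simp add: algebra_simps)

lemma G_main:
  assumes "a \<noteq> 0"
  shows "Gfps a r y (Suc h) = fps_const (1 - a) *
     (fps_const (r^2) * fps_X^2 * q_star a r y (Suc h) / w_star a r y (Suc h))"
proof -
  have w: "w_star a r y (Suc h) = Qf a r y h" using w_Q[OF assms] by blast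
  have q: "fps_const ((1-a)*r) * q_star a r y (Suc h) = Vf a r y h" using q_V[OF assms] by blast
  have w0: "w_star a r y (Suc h) $ 0 \<noteq> 0" using w Qf0 by simp
  have "Gfps a r y (Suc h) * Qf a r y h = fps_X^2 * fps_const r * Vf a r y h"
    unfolding G_Q Vf_def by (simp add: algebra_simps power2_eq_square)
  also have "\<dots> = fps_const (1 - a) * (fps_const (r^2) * fps_X^2 * q_star a r y (Suc h))"
    unfolding q[symmetric] by (simp add: algebra_simps power2_eq_square)
  finally have eq: "Gfps a r y (Suc h) * w_star a r y (Suc h) =
     fps_const (1 - a) * (fps_const (r^2) * fps_X^2 * q_star a r y (Suc h))" using w by simp
  have inv: "w_star a r y (Suc h) * inverse (w_star a r y (Suc h)) = 1"
    using w0 by (rule inverse_mult_eq_1')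
  have "Gfps a r y (Suc h) = Gfps a r y (Suc h) * w_star a r y (Suc h) * inverse (w_star a r y (Suc h))"
    using inv by (simp add: mult.assoc)
  also have "\<dots> = fps_const (1 - a) *
     (fps_const (r^2) * fps_X^2 * q_star a r y (Suc h) * inverse (w_star a r y (Suc h)))"
    unfolding eq by (simp add: mult.assoc)
  also have "\<dots> = fps_const (1 - a) *
     (fps_const (r^2) * fps_X^2 * q_star a r y (Suc h) / w_star a r y (Suc h))"
    using w0 by (simp add: fps_divide_unit)
  finally show ?thesis .
qed




lemma trf_nonneg: "0 \<le> a \<Longrightarrow> a \<le> 1 \<Longrightarrow> 0 \<le> trf a l e"
  by (cases l) (auto simp: trf_def)

lemma tpo_nonneg: "0 \<le> a \<Longrightarrow> a \<le> 1 \<Longrightarrow> 0 \<le> tpo a l u"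
  by (induction u arbitrary: l) (auto intro!: mult_nonneg_nonneg trf_nonneg)

lemma trf_sum: "l = None \<or> l = Some 1 \<or> l = Some (-1) \<Longrightarrow> trf a l 1 + trf a l (-1) = 1"
  by (auto simp: trf_def)

lemma pf_bound:
  assumes "0 \<le> a" "a \<le> 1"
  shows "l = None \<or> l = Some 1 \<or> l = Some (-1) \<Longrightarrow>
    finite S \<Longrightarrow> (\<forall>u\<in>S. set u \<subseteq> {-1, 1} \<and> length u \<le> m) \<Longrightarrow>
    (\<forall>u\<in>S. \<forall>v\<in>S. take (length u) v = u \<longrightarrow> u = v) \<Longrightarrow> (\<Sum>u\<in>S. tpo a l u) \<le> 1"
proof (induction m arbitrary: S l)
  case 0
  then have "S \<subseteq> {[]}" by auto
  then have "S = {} \<or> S = {[]}" by auto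
  then show ?case by auto
next
  case (Suc m)
  show ?case
  proof (cases "[] \<in> S")
    case True
    then have "S = {[]}" using Suc.prems(4) by fastforce
    then show ?thesis by simp
  next
    case False
    define Sx where "Sx = (\<lambda>x::int. {u\<in>S. hd u = x})"
    have hdpm: "hd u = 1 \<or> hd u = -1" if "u \<in> S" for u
    proof -
      have "u \<noteq> []" using False that by auto
      then have "hd u \<in> set u" by simp
      then show ?thesis using Suc.prems(3) that by auto
    qed
    have Sdec: "S = Sx 1 \<union> Sx (-1)" using hdpm by (auto simp: Sx_def)
    have fin: "finite (Sx x)" for x using Suc.prems(2) by (simp add: Sx_def)
    have part: "(\<Sum>u\<in>Sx x. tpo a l u) \<le> trf a l x" if xpm: "x = 1 \<or> x = -1" for x
    proof -
      have ux: "u = x # tl u" if "u \<in> Sx x" for u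
        using that False by (cases u) (auto simp: Sx_def)
      have inj: "inj_on tl (Sx x)" by (metis inj_onI ux)
      have "(\<Sum>u\<in>Sx x. tpo a l u) = (\<Sum>u\<in>Sx x. trf a l x * tpo a (Some x) (tl u))"
        by (rule sum.cong[OF refl]) (metis tpo.simps(2) ux)
      also have "\<dots> = trf a l x * (\<Sum>v\<in>tl ` Sx x. tpo a (Some x) v)"
        by (simp add: sum_distrib_left sum.reindex[OF inj])
      also have "(\<Sum>v\<in>tl ` Sx x. tpo a (Some x) v) \<le> 1"
      proof (rule Suc.IH)
        show "Some x = None \<or> Some x = Some 1 \<or> Some x = Some (-1)" using xpm by simp
        show "finite (tl ` Sx x)" using fin by simp
        show "\<forall>u\<in>tl ` Sx x. set u \<subseteq> {-1, 1} \<and> length u \<le> m"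
        proof
          fix v assume "v \<in> tl ` Sx x"
          then obtain u where u: "u \<in> Sx x" "v = tl u" by blast
          then have "u \<in> S" by (simp add: Sx_def)
          then have "set u \<subseteq> {-1, 1}" "length u \<le> Suc m" using Suc.prems(3) by auto
          moreover have "u = x # v" using ux[OF u(1)] u(2) by simp
          ultimately show "set v \<subseteq> {-1, 1} \<and> length v \<le> m" by auto
        qed
        show "\<forall>u\<in>tl ` Sx x. \<forall>v\<in>tl ` Sx x. take (length u) v = u \<longrightarrow> u = v"
        proof (intro ballI impI)
          fix v1 v2 assume "v1 \<in> tl ` Sx x" "v2 \<in> tl ` Sx x" and t: "take (length v1) v2 = v1"
          then obtain u1 u2 where u: "u1 \<in> Sx x" "v1 = tl u1" "u2 \<in> Sx x" "v2 = tl u2" by blast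
          have e1: "u1 = x # v1" using ux[OF u(1)] u(2) by simp
          have e2: "u2 = x # v2" using ux[OF u(3)] u(4) by simp
          have "take (length u1) u2 = u1" using t e1 e2 by simp
          then have "u1 = u2" using Suc.prems(4) u(1,3) by (auto simp: Sx_def)
          then show "v1 = v2" using u by simp
        qed
      qed
      then have "trf a l x * (\<Sum>v\<in>tl ` Sx x. tpo a (Some x) v) \<le> trf a l x * 1"
        by (intro mult_left_mono) (auto intro: trf_nonneg assms)
      finally show ?thesis by simp
    qed
    have disj: "Sx 1 \<inter> Sx (-1) = {}" by (auto simp: Sx_def)
    have "(\<Sum>u\<in>S. tpo a l u) = (\<Sum>u\<in>Sx 1. tpo a l u) + (\<Sum>u\<in>Sx (-1). tpo a l u)"
      unfolding Sdec by (rule sum.union_disjoint) (use fin disj in auto)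
    also have "\<dots> \<le> trf a l 1 + trf a l (-1)" using part[of 1] part[of "-1"] by simp
    also have "\<dots> = 1" by (rule trf_sum[OF Suc.prems(1)])
    finally show ?thesis .
  qed
qed

lemma finite_exc: "finite (exc_paths n N)"
  by (rule finite_subset[OF _ finite_pm[of n]]) (auto simp: exc_paths_def)

lemma exc_prefix_free:
  assumes u: "u \<in> exc_paths n N" and v: "v \<in> exc_paths m N" and t: "take (length u) v = u"
  shows "u = v"
proof -
  have lu: "length u = n" "1 \<le> n" "walk u n = 0" using u by (auto simp: exc_paths_def)
  have lv: "length v = m" "\<forall>k\<in>{1..<m}. walk v k \<noteq> 0" using v by (auto simp: exc_paths_def)
  have "\<not> n < m"
  proof
    assume "n < m"
    then have "n \<in> {1..<m}" using lu by simp
    then have "walk v n \<noteq> 0" using lv by blast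
    moreover have "walk v n = walk u n" using t lu by (simp add: walk_def)
    ultimately show False using lu by simp
  qed
  moreover have "\<not> m < n"
  proof
    assume "m < n"
    then have "take (length u) v = v" using lu lv by simp
    then show False using t lu lv \<open>m < n\<close> by simp
  qed
  ultimately have "n = m" by simp
  then show ?thesis using t lu lv by simp
qed

lemma partial_bound:
  assumes "0 \<le> a" "a \<le> 1"
  shows "(\<Sum>n\<le>M. \<Sum>es\<in>exc_paths n N. path_prob a es) \<le> 1"
proof -
  have "(\<Sum>n\<le>M. \<Sum>es\<in>exc_paths n N. path_prob a es) = (\<Sum>es\<in>(\<Union>n\<le>M. exc_paths n N). path_prob a es)"
  proof (rule sum.UNION_disjoint[symmetric])
    show "finite {..M}" by simp
    show "\<forall>i\<in>{..M}. finite (exc_paths i N)" by (simp add: finite_exc)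
    show "\<forall>i\<in>{..M}. \<forall>j\<in>{..M}. i \<noteq> j \<longrightarrow> exc_paths i N \<inter> exc_paths j N = {}"
      by (auto simp: exc_paths_def)
  qed
  also have "\<dots> = (\<Sum>es\<in>(\<Union>n\<le>M. exc_paths n N). tpo a None es)" by (simp add: path_prob_tpo)
  also have "\<dots> \<le> 1"
  proof (rule pf_bound[OF assms])
    show "(None::int option) = None \<or> None = Some 1 \<or> None = Some (-1)" by simp
    show "finite (\<Union>n\<le>M. exc_paths n N)" by (simp add: finite_exc)
    show "\<forall>u\<in>(\<Union>n\<le>M. exc_paths n N). set u \<subseteq> {-1, 1} \<and> length u \<le> M"
      by (auto simp: exc_paths_def)
    show "\<forall>u\<in>(\<Union>n\<le>M. exc_paths n N). \<forall>v\<in>(\<Union>n\<le>M. exc_paths n N). take (length u) v = u \<longrightarrow> u = v"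
      using exc_prefix_free by blast
  qed
  finally show ?thesis .
qed

lemma G11_nth: "Gfps a 1 1 N $ n = (\<Sum>es\<in>exc_paths n N. path_prob a es)"
  by (simp add: Gfps_def)

lemma G11_summable:
  assumes "0 \<le> a" "a \<le> 1"
  shows "summable (\<lambda>n. \<bar>Gfps a 1 1 N $ n\<bar>)"
proof -
  have nn: "0 \<le> Gfps a 1 1 N $ n" for n
    unfolding G11_nth by (auto intro!: sum_nonneg simp: path_prob_tpo tpo_nonneg assms)
  have "summable (\<lambda>n. Gfps a 1 1 N $ n)"
    by (rule bounded_imp_summable[where B=1]) (use nn partial_bound[OF assms] in \<open>simp_all add: G11_nth\<close>)
  then show ?thesis using nn by simp
qed

section \<open>Evaluation at 1 of absolutely summable fps\<close>

definition AS :: "real fps \<Rightarrow> bool" where "AS F \<longleftrightarrow> summable (\<lambda>n. \<bar>F $ n\<bar>)"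
definition ev :: "real fps \<Rightarrow> real" where "ev F = (\<Sum>n. F $ n)"

lemma AS_finite: assumes "\<And>n. n > d \<Longrightarrow> F $ n = 0" shows "AS F" "ev F = (\<Sum>n\<le>d. F $ n)"
proof -
  have "(\<lambda>n. \<bar>F $ n\<bar>) sums (\<Sum>n<Suc d. \<bar>F $ n\<bar>)"
    by (rule sums_finite) (use assms in auto)
  then show "AS F" unfolding AS_def by (rule sums_summable)
  have "(\<lambda>n. F $ n) sums (\<Sum>n<Suc d. F $ n)"
    by (rule sums_finite) (use assms in auto)
  then show "ev F = (\<Sum>n\<le>d. F $ n)" unfolding ev_def by (simp add: sums_iff lessThan_Suc_atMost)
qed

lemma AS_const: "AS (fps_const c)" "ev (fps_const c) = c"
  using AS_finite[of 0 "fps_const c"] by auto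

lemma AS_X2: "AS (fps_X^2)" "ev (fps_X^2) = 1"
proof -
  have "(fps_X^2::real fps) $ n = 0" if "n > 2" for n using that by (simp add: fps_X_power_iff)
  then have "AS (fps_X^2)" "ev (fps_X^2) = (\<Sum>n\<le>2. (fps_X^2::real fps) $ n)"
    using AS_finite[of 2 "fps_X^2"] by auto
  then show "AS (fps_X^2)" "ev (fps_X^2) = 1" by (auto simp: fps_X_power_iff numeral_2_eq_2)
qed

lemma AS_add: "AS F \<Longrightarrow> AS G \<Longrightarrow> AS (F + G) \<and> ev (F + G) = ev F + ev G"
proof -
  assume f: "AS F" and g: "AS G"
  have sf: "summable (\<lambda>n. F $ n)" using f unfolding AS_def by (rule summable_rabs_cancel)
  have sg: "summable (\<lambda>n. G $ n)" using g unfolding AS_def by (rule summable_rabs_cancel)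
  have "summable (\<lambda>n. \<bar>F $ n\<bar> + \<bar>G $ n\<bar>)" using f g unfolding AS_def by (rule summable_add)
  then have "AS (F + G)" unfolding AS_def
    by (rule summable_comparison_test'[where N=0]) (simp add: abs_triangle_ineq)
  moreover have e: "(\<lambda>n. (F + G) $ n) = (\<lambda>n. F $ n + G $ n)" by (simp add: fun_eq_iff)
  have "ev (F + G) = (\<Sum>n. F $ n + G $ n)" unfolding ev_def e ..
  then have "ev (F + G) = ev F + ev G" using suminf_add[OF sf sg] by (simp add: ev_def)
  ultimately show ?thesis by simp
qed

lemma AS_neg: "AS F \<Longrightarrow> AS (- F) \<and> ev (- F) = - ev F"
proof -
  assume f: "AS F"
  have sf: "summable (\<lambda>n. F $ n)" using f unfolding AS_def by (rule summable_rabs_cancel)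
  have "(\<lambda>n. (- F) $ n) = (\<lambda>n. - (F $ n))" by (simp add: fun_eq_iff)
  then show ?thesis using f suminf_minus[OF sf] by (simp add: AS_def ev_def)
qed

lemma AS_diff: "AS F \<Longrightarrow> AS G \<Longrightarrow> AS (F - G) \<and> ev (F - G) = ev F - ev G"
  using AS_add[of F "- G"] AS_neg[of G] by simp

lemma AS_mult: "AS F \<Longrightarrow> AS G \<Longrightarrow> AS (F * G) \<and> ev (F * G) = ev F * ev G"
proof -
  assume f: "AS F" and g: "AS G"
  have f': "summable (\<lambda>k. norm (F $ k))" and g': "summable (\<lambda>k. norm (G $ k))"
    using f g by (simp_all add: AS_def)
  have cp: "(\<lambda>k. \<Sum>i\<le>k. F $ i * G $ (k - i)) sums ((\<Sum>k. F $ k) * (\<Sum>k. G $ k))"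
    by (rule Cauchy_product_sums[OF f' g'])
  have f2: "summable (\<lambda>k. norm (norm (F $ k)))" and g2: "summable (\<lambda>k. norm (norm (G $ k)))"
    using f' g' by simp_all
  have cpa: "(\<lambda>k. \<Sum>i\<le>k. norm (F $ i) * norm (G $ (k - i))) sums ((\<Sum>k. norm (F $ k)) * (\<Sum>k. norm (G $ k)))"
    by (rule Cauchy_product_sums[OF f2 g2])
  have nth: "(F * G) $ k = (\<Sum>i\<le>k. F $ i * G $ (k - i))" for k
    by (simp add: fps_mult_nth atMost_atLeast0)
  have "summable (\<lambda>k. \<Sum>i\<le>k. norm (F $ i) * norm (G $ (k - i)))" using cpa by (rule sums_summable)
  then have "AS (F * G)" unfolding AS_def
  proof (rule summable_comparison_test'[where N=0])
    fix k
    have "\<bar>\<Sum>i\<le>k. F $ i * G $ (k - i)\<bar> \<le> (\<Sum>i\<le>k. \<bar>F $ i * G $ (k - i)\<bar>)" by (rule sum_abs)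
    then show "norm \<bar>(F * G) $ k\<bar> \<le> (\<Sum>i\<le>k. norm (F $ i) * norm (G $ (k - i)))"
      by (simp add: nth abs_mult)
  qed
  moreover have "(\<lambda>n. (F * G) $ n) = (\<lambda>k. \<Sum>i\<le>k. F $ i * G $ (k - i))" using nth by (simp add: fun_eq_iff)
  then have "ev (F * G) = ev F * ev G" using cp unfolding ev_def by (simp add: sums_iff)
  ultimately show ?thesis by simp
qed

lemma AS_PQ:
  "AS (Pf a 1 1 h) \<and> AS (Qf a 1 1 h) \<and>
   ev (Pf a 1 1 h) = a^h * (1-a) * h \<and> ev (Qf a 1 1 h) = a^h * (h + 1 - h * a)"
proof (induction h)
  case 0 then show ?case using AS_const[of 0] AS_const[of 1] by (simp add: PQ_0)
next
  case (Suc h)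
  define P where "P = Pf a 1 1 h"
  define Q where "Q = Qf a 1 1 h"
  have P: "AS P" "ev P = a^h * (1-a) * h" and Q: "AS Q" "ev Q = a^h * (h + 1 - h * a)"
    using Suc.IH by (simp_all add: P_def Q_def)
  have eP: "Pf a 1 1 (Suc h) = fps_X^2 * fps_const a * (fps_const (1-a) * Q + fps_const a * P)"
    by (simp add: Pf_Suc P_def Q_def)
  have eQ: "Qf a 1 1 (Suc h) = (1 - fps_const ((1-a)^2) * fps_X^2) * Q - fps_const ((1-a)*a) * fps_X^2 * P"
    by (simp add: Qf_Suc P_def Q_def)
  note C = AS_const AS_X2
  have A1: "AS (fps_const (1-a) * Q) \<and> ev (fps_const (1-a) * Q) = (1-a) * ev Q"
    using AS_mult[OF C(1) Q(1)] C(2) by simp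
  have A2: "AS (fps_const a * P) \<and> ev (fps_const a * P) = a * ev P"
    using AS_mult[OF C(1) P(1)] C(2) by simp
  have A3: "AS (fps_const (1-a) * Q + fps_const a * P) \<and>
      ev (fps_const (1-a) * Q + fps_const a * P) = (1-a) * ev Q + a * ev P"
    using AS_add[of "fps_const (1-a) * Q" "fps_const a * P"] A1 A2 by simp
  have A4: "AS (fps_X^2 * fps_const a) \<and> ev (fps_X^2 * fps_const a :: real fps) = a"
    using AS_mult[OF C(3) C(1)] C(4) C(2) by simp
  have AP: "AS (Pf a 1 1 (Suc h)) \<and> ev (Pf a 1 1 (Suc h)) = a * ((1-a) * ev Q + a * ev P)"
    unfolding eP using AS_mult[of "fps_X^2 * fps_const a"] A3 A4 by simp
  have B1: "AS (fps_const ((1-a)^2) * fps_X^2) \<and> ev (fps_const ((1-a)^2) * fps_X^2 :: real fps) = (1-a)^2"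
    using AS_mult[OF C(1) C(3)] C(2) C(4) by simp
  have B2: "AS (1 - fps_const ((1-a)^2) * fps_X^2) \<and> ev (1 - fps_const ((1-a)^2) * fps_X^2 :: real fps) = 1 - (1-a)^2"
    using AS_diff[of 1 "fps_const ((1-a)^2) * fps_X^2"] B1 AS_const[of 1] by simp
  have B3: "AS ((1 - fps_const ((1-a)^2) * fps_X^2) * Q) \<and> ev ((1 - fps_const ((1-a)^2) * fps_X^2) * Q) = (1 - (1-a)^2) * ev Q"
    using AS_mult[OF _ Q(1)] B2 by simp
  have B4: "AS (fps_const ((1-a)*a) * fps_X^2) \<and> ev (fps_const ((1-a)*a) * fps_X^2 :: real fps) = (1-a)*a"
    using AS_mult[OF C(1) C(3)] C(2) C(4) by simp
  have B5: "AS (fps_const ((1-a)*a) * fps_X^2 * P) \<and> ev (fps_const ((1-a)*a) * fps_X^2 * P) = (1-a)*a * ev P"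
    using AS_mult[OF _ P(1)] B4 by simp
  have AQ: "AS (Qf a 1 1 (Suc h)) \<and> ev (Qf a 1 1 (Suc h)) = (1 - (1-a)^2) * ev Q - (1-a)*a * ev P"
    unfolding eQ using AS_diff B3 B5 by simp
  have "a * ((1-a) * ev Q + a * ev P) = a^(Suc h) * (1-a) * (Suc h)"
    unfolding P(2) Q(2) by (simp add: algebra_simps)
  moreover have "(1 - (1-a)^2) * ev Q - (1-a)*a * ev P = a^(Suc h) * (Suc h + 1 - Suc h * a)"
    unfolding P(2) Q(2) by (simp add: algebra_simps power2_eq_square)
  ultimately show ?case using AP AQ by simp
qed

lemma prob_value:
  fixes a :: real
  assumes a: "0 < a" "a < 1"
  shows "prob_H_le a (Suc h) = real (Suc h) * (1 - a) / (real (Suc h) - real h * a)"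
proof -
  have G: "AS (Gfps a 1 1 (Suc h))" using G11_summable[of a "Suc h"] a by (simp add: AS_def)
  have PQ: "AS (Pf a 1 1 h)" "AS (Qf a 1 1 h)" "ev (Pf a 1 1 h) = a^h * (1-a) * h"
    "ev (Qf a 1 1 h) = a^h * (h + 1 - h * a)" using AS_PQ[of a h] by auto
  have eq: "Gfps a 1 1 (Suc h) * Qf a 1 1 h =
      fps_X^2 * (fps_const (1-a) * Qf a 1 1 h + fps_const a * Pf a 1 1 h)"
    using G_Q[of a 1 1 h] by simp
  have lhs: "ev (Gfps a 1 1 (Suc h) * Qf a 1 1 h) = ev (Gfps a 1 1 (Suc h)) * ev (Qf a 1 1 h)"
    using AS_mult[OF G PQ(2)] by simp
  have A1: "AS (fps_const (1-a) * Qf a 1 1 h) \<and> ev (fps_const (1-a) * Qf a 1 1 h) = (1-a) * ev (Qf a 1 1 h)"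
    using AS_mult[OF AS_const(1) PQ(2)] AS_const(2) by simp
  have A2: "AS (fps_const a * Pf a 1 1 h) \<and> ev (fps_const a * Pf a 1 1 h) = a * ev (Pf a 1 1 h)"
    using AS_mult[OF AS_const(1) PQ(1)] AS_const(2) by simp
  have A3: "AS (fps_const (1-a) * Qf a 1 1 h + fps_const a * Pf a 1 1 h) \<and>
      ev (fps_const (1-a) * Qf a 1 1 h + fps_const a * Pf a 1 1 h) = (1-a) * ev (Qf a 1 1 h) + a * ev (Pf a 1 1 h)"
    using AS_add A1 A2 by simp
  have rhs: "ev (fps_X^2 * (fps_const (1-a) * Qf a 1 1 h + fps_const a * Pf a 1 1 h)) =
      (1-a) * ev (Qf a 1 1 h) + a * ev (Pf a 1 1 h)"
    using AS_mult[OF AS_X2(1)] A3 AS_X2(2) by simp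
  have evG: "ev (Gfps a 1 1 (Suc h)) * ev (Qf a 1 1 h) = (1-a) * ev (Qf a 1 1 h) + a * ev (Pf a 1 1 h)"
    using lhs rhs eq by simp
  have pos: "0 < (h + 1 - h * a :: real)"
  proof -
    have "h * a \<le> h" using a by (simp add: mult_left_le)
    then show ?thesis by simp
  qed
  have Qpos: "ev (Qf a 1 1 h) \<noteq> 0" using PQ(4) pos a by simp
  have "ev (Gfps a 1 1 (Suc h)) = ((1-a) * ev (Qf a 1 1 h) + a * ev (Pf a 1 1 h)) / ev (Qf a 1 1 h)"
    using evG Qpos by (simp add: field_simps)
  also have "\<dots> = (a^h * ((1-a) * (h+1))) / (a^h * (h + 1 - h * a))"
    unfolding PQ(3,4) by (simp add: algebra_simps)
  also have "\<dots> = ((1-a) * (h+1)) / (h + 1 - h * a)"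
    using a by (simp only: mult_divide_mult_cancel_left_if) simp
  also have "\<dots> = real (Suc h) * (1 - a) / (real (Suc h) - real h * a)"
    by (simp add: algebra_simps)
  finally have "ev (Gfps a 1 1 (Suc h)) = real (Suc h) * (1 - a) / (real (Suc h) - real h * a)" .
  moreover have "prob_H_le a (Suc h) = ev (Gfps a 1 1 (Suc h))"
    by (simp add: prob_H_le_def ev_def G11_nth)
  ultimately show ?thesis by simp
qed




theorem proposition5:
  fixes a r y :: real and N :: nat
  assumes "0 < a" and "a < 1" and "1 \<le> N"
  shows "K_fps a r y N =
    fps_const ((real N - (real N - 1) * a) / real N) *
      (fps_const (r^2) * fps_X^2 * q_star a r y N / w_star a r y N)"
proof -
  obtain h where N: "N = Suc h" using assms(3) by (cases N) auto
  define F where "F = fps_const (r^2) * fps_X^2 * q_star a r y N / w_star a r y N"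
  define P where "P = prob_H_le a N"
  have P: "P = real (Suc h) * (1 - a) / (real (Suc h) - real h * a)"
    unfolding P_def N using prob_value assms(1,2) by blast
  have G: "Gfps a r y N = fps_const (1 - a) * F"
    unfolding F_def N using G_main assms(1) by simp
  have K: "K_fps a r y N = fps_const (1 / P) * Gfps a r y N"
    by (simp add: K_fps_def Gfps_def P_def fps_eq_iff)
  have pos: "0 < real h + 1 - real h * a"
  proof -
    have "real h * a \<le> real h" using assms by (simp add: mult_left_le)
    then show ?thesis by simp
  qed
  have c1: "1 / P = (real (Suc h) - real h * a) / (real (Suc h) * (1 - a))" unfolding P by simp
  have "1 / P * (1 - a) = (real (Suc h) - real h * a) / real (Suc h)"
    unfolding c1 using assms(2) by simp
  then have c: "1 / P * (1 - a) = (real N - (real N - 1) * a) / real N"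
    unfolding N by simp
  show ?thesis unfolding K G F_def[symmetric] using c by (simp add: mult.assoc[symmetric])
qed

end
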